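(* Let $X$ and $Y$ be two real random variables satisfying $X \leq_{cx} Y$, with distribution functions $F_X$ and $F_Y$ respectively. For a given $\alpha \in \mathbb{R}$, let \[h = \min\left[1,\ \max\left\{w : w (x-\alpha) \leq \int_{-\infty}^x F_Y(t)\, \mathrm{d} t \ \text{ for all } x \in \mathbb{R}\right\} \right].\] Then $F_X(\alpha) \leq h$. Furthermore, there exists a random variable $\tilde X$, with distribution function $F_{\tilde X}$, such that $\tilde X \leq_{cx} Y$ and $F_{\tilde X}(\alpha) = h$.
   Context: For random variables $X$ and $Y$, $X \leq_{cx} Y$ means $\mathrm{E}\{h(X)\} \leq \mathrm{E}\{h(Y)\}$ for every convex function $h$ for which the expectations exist. *)

theory Defs
  imports "HOL-Probability.Probability"
begin

text \<open>A real random variable is represented by its law: a probability measure on the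
  Borel sets of the reals.\<close>

definition real_law :: "real measure \<Rightarrow> bool" where
  "real_law M \<longleftrightarrow> prob_space M \<and> sets M = sets borel"

definition cdf_of :: "real measure \<Rightarrow> real \<Rightarrow> real" where
  "cdf_of M x = measure M {..x}"

definition cx_le :: "real measure \<Rightarrow> real measure \<Rightarrow> bool" where
  "cx_le MX MY \<longleftrightarrow>
     integrable MX (\<lambda>x. x) \<and> integrable MY (\<lambda>x. x) \<and>
     (\<forall>h::real \<Rightarrow> real. convex_on UNIV h \<longrightarrow> integrable MX h \<longrightarrow> integrable MY h \<longrightarrow>
        (\<integral>x. h x \<partial>MX) \<le> (\<integral>x. h x \<partial>MY))"

end

theory Submission imports Defs begin

lemma psi_eq:
  assumes "real_law M"
  shows "(LINT t:{..x}|lborel. cdf_of M t) = (\<integral>y. max 0 (x - y) \<partial>M)"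
proof -
  interpret prob_space M using assms by (simp add: real_law_def)
  have sM: "sets M = sets borel" using assms by (simp add: real_law_def)
  have bm: "\<And>f::real\<Rightarrow>real. f \<in> borel_measurable borel \<Longrightarrow> f \<in> borel_measurable M"
    using measurable_cong_sets[OF sM refl, of borel] by blast
  interpret P: pair_sigma_finite M lborel
    by (intro pair_sigma_finite.intro) unfold_locales
  let ?g = "\<lambda>y t. indicator {z::real\<times>real. fst z \<le> snd z \<and> snd z \<le> x} (y,t) :: ennreal"
  have meas: "case_prod ?g \<in> borel_measurable (M \<Otimes>\<^sub>M lborel)"
    apply (subst measurable_cong_sets[OF sets_pair_measure_cong[OF sM sets_lborel] refl])
    apply (simp add: split_beta')
    by measurable
  have mono: "mono (cdf_of M)"
    unfolding cdf_of_def mono_def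
    by (auto intro!: finite_measure_mono simp: sM)
  have cm: "cdf_of M \<in> borel_measurable borel"
    using borel_measurable_mono[OF mono] by simp
  have "(LINT t:{..x}|lborel. cdf_of M t) = enn2real (\<integral>\<^sup>+ t. ennreal (indicator {..x} t *\<^sub>R cdf_of M t) \<partial>lborel)"
    unfolding set_lebesgue_integral_def
    apply (rule integral_eq_nn_integral)
    using cm apply simp
    by (auto simp: cdf_of_def indicator_def)
  also have "(\<integral>\<^sup>+ t. ennreal (indicator {..x} t *\<^sub>R cdf_of M t) \<partial>lborel) = (\<integral>\<^sup>+ t. (\<integral>\<^sup>+ y. ?g y t \<partial>M) \<partial>lborel)"
  proof (rule nn_integral_cong)
    fix t
    have "(\<integral>\<^sup>+ y. ?g y t \<partial>M) = (\<integral>\<^sup>+ y. indicator {..x} t * indicator {..t} y \<partial>M)"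
      by (intro nn_integral_cong) (auto simp: indicator_def)
    also have "\<dots> = indicator {..x} t * emeasure M {..t}"
      by (subst nn_integral_cmult) (auto simp: sM intro!: borel_measurable_indicator)
    also have "\<dots> = ennreal (indicator {..x} t *\<^sub>R cdf_of M t)"
      by (auto simp: cdf_of_def emeasure_eq_measure indicator_def)
    finally show "ennreal (indicator {..x} t *\<^sub>R cdf_of M t) = (\<integral>\<^sup>+ y. ?g y t \<partial>M)" by simp
  qed
  also have "\<dots> = (\<integral>\<^sup>+ y. (\<integral>\<^sup>+ t. ?g y t \<partial>lborel) \<partial>M)"
    by (rule P.Fubini'[OF meas])
  also have "\<dots> = (\<integral>\<^sup>+ y. ennreal (max 0 (x - y)) \<partial>M)"
  proof (rule nn_integral_cong)
    fix y
    have "(\<integral>\<^sup>+ t. ?g y t \<partial>lborel) = emeasure lborel {y..x}"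
    proof -
      have "(\<integral>\<^sup>+ t. ?g y t \<partial>lborel) = (\<integral>\<^sup>+ t. indicator {y..x} t \<partial>lborel)"
        by (intro nn_integral_cong) (auto simp: indicator_def)
      then show ?thesis by simp
    qed
    also have "\<dots> = ennreal (max 0 (x - y))"
      by (cases "y \<le> x") auto
    finally show "(\<integral>\<^sup>+ t. ?g y t \<partial>lborel) = ennreal (max 0 (x - y))" .
  qed
  also have "enn2real \<dots> = (\<integral>y. max 0 (x - y) \<partial>M)"
    by (rule integral_eq_nn_integral[symmetric]) (auto intro!: bm)
  finally show ?thesis .
qed

lemma convex_pos_part: "convex_on UNIV (\<lambda>y::real. max 0 (x - y))"
proof (rule convex_onI)
  fix t a b :: real assume t: "0 < t" "t < 1"
  have "(1 - t) * (x - a) \<le> (1 - t) * max 0 (x - a)" using t by (intro mult_left_mono) auto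
  moreover have "t * (x - b) \<le> t * max 0 (x - b)" using t by (intro mult_left_mono) auto
  moreover have "0 \<le> (1 - t) * max 0 (x - a)" "0 \<le> t * max 0 (x - b)" using t by auto
  moreover have e: "x - ((1 - t) *\<^sub>R a + t *\<^sub>R b) = (1 - t) * (x - a) + t * (x - b)"
    by (simp add: algebra_simps)
  ultimately show "max 0 (x - ((1 - t) *\<^sub>R a + t *\<^sub>R b)) \<le> (1 - t) * max 0 (x - a) + t * max 0 (x - b)"
    unfolding e by (subst max.bounded_iff) linarith
qed auto

lemma part1:
  assumes "real_law M" "real_law MY" "cx_le M MY"
  shows "cdf_of M \<alpha> * (x - \<alpha>) \<le> (\<integral>y. max 0 (x - y) \<partial>MY)"
proof -
  interpret prob_space M using assms by (simp add: real_law_def)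
  have sM: "sets M = sets borel" using assms by (simp add: real_law_def)
  have bm: "\<And>f::real\<Rightarrow>real. f \<in> borel_measurable borel \<Longrightarrow> f \<in> borel_measurable M"
    using measurable_cong_sets[OF sM refl, of borel] by blast
  interpret Y: prob_space MY using assms by (simp add: real_law_def)
  have sY: "sets MY = sets borel" using assms by (simp add: real_law_def)
  have iM: "integrable M (\<lambda>x. x)" and iY: "integrable MY (\<lambda>x. x)"
    using assms(3) by (auto simp: cx_le_def)
  have nonneg: "0 \<le> (\<integral>y. max 0 (x - y) \<partial>MY)" by (intro integral_nonneg_AE) auto
  show ?thesis
  proof (cases "x \<le> \<alpha>")
    case True
    have "cdf_of M \<alpha> * (x - \<alpha>) \<le> 0"
      using True by (intro mult_nonneg_nonpos) (auto simp: cdf_of_def)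
    then show ?thesis using nonneg by linarith
  next
    case False
    have i1: "integrable M (\<lambda>y. max 0 (x - y))"
      using iM by (intro integrable_max) auto
    have i2: "integrable MY (\<lambda>y. max 0 (x - y))"
      using iY by (intro integrable_max) auto
    have ii: "integrable M (\<lambda>y. indicator {..\<alpha>} y * (x - \<alpha>))"
      by (intro integrable_mult_left integrable_real_indicator) (auto simp: sM emeasure_eq_measure)
    have "cdf_of M \<alpha> * (x - \<alpha>) = (\<integral>y. indicator {..\<alpha>} y * (x - \<alpha>) \<partial>M)"
      by (simp add: cdf_of_def sM)
    also have "\<dots> \<le> (\<integral>y. max 0 (x - y) \<partial>M)"
      using False
      by (intro integral_mono i1 ii) (auto simp: indicator_def)
    also have "\<dots> \<le> (\<integral>y. max 0 (x - y) \<partial>MY)"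
      using assms(3) i1 i2 convex_pos_part[of x] unfolding cx_le_def by blast
    finally show ?thesis .
  qed
qed

lemma greatest_S:
  fixes \<Psi> :: "real \<Rightarrow> real" and \<alpha> :: real
  assumes nn: "\<And>x. 0 \<le> \<Psi> x"
  defines "m \<equiv> GREATEST w::real. \<forall>x::real. w * (x - \<alpha>) \<le> \<Psi> x"
  shows "\<forall>x. m * (x - \<alpha>) \<le> \<Psi> x" "\<And>w. \<forall>x. w * (x - \<alpha>) \<le> \<Psi> x \<Longrightarrow> w \<le> m" "0 \<le> m"
proof -
  define S where "S = {w::real. \<forall>x. w * (x - \<alpha>) \<le> \<Psi> x}"
  have 0: "0 \<in> S" using nn by (auto simp: S_def)
  have bdd: "w \<le> \<Psi> (\<alpha> + 1)" if "w \<in> S" for w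
    using that by (auto simp: S_def dest: spec[of _ "\<alpha> + 1"])
  have bddS: "bdd_above S" using bdd by (auto simp: bdd_above_def)
  define s where "s = Sup S"
  have s0: "0 \<le> s" unfolding s_def using 0 bddS by (rule cSup_upper)
  have sS: "s \<in> S"
  proof -
    { fix x
      have "s * (x - \<alpha>) \<le> \<Psi> x"
      proof (cases "x \<le> \<alpha>")
        case True
        then have "s * (x - \<alpha>) \<le> 0" using s0 by (intro mult_nonneg_nonpos) auto
        then show ?thesis using nn[of x] by linarith
      next
        case False
        have "s \<le> \<Psi> x / (x - \<alpha>)" unfolding s_def
        proof (rule cSup_least)
          show "S \<noteq> {}" using 0 by auto
        next
          fix w assume "w \<in> S"
          then have "w * (x - \<alpha>) \<le> \<Psi> x" by (auto simp: S_def)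
          then show "w \<le> \<Psi> x / (x - \<alpha>)" using False by (simp add: field_simps)
        qed
        then show ?thesis using False by (simp add: field_simps)
      qed }
    then show ?thesis by (auto simp: S_def)
  qed
  have sup: "w \<le> s" if "w \<in> S" for w unfolding s_def using that bddS by (rule cSup_upper)
  have ms: "m = s" unfolding m_def
    by (rule Greatest_equality) (use sS sup in \<open>auto simp: S_def\<close>)
  show "\<forall>x. m * (x - \<alpha>) \<le> \<Psi> x" using sS ms by (auto simp: S_def)
  show "\<And>w. \<forall>x. w * (x - \<alpha>) \<le> \<Psi> x \<Longrightarrow> w \<le> m" using sup ms by (auto simp: S_def)
  show "0 \<le> m" using s0 ms by simp
qed

lemma exist_one:
  assumes rl: "real_law MY" and iY: "integrable MY (\<lambda>x. x)"
    and S: "\<forall>x. 1 * (x - \<alpha>) \<le> (\<integral>y. max 0 (x - y) \<partial>MY)"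
  shows "\<exists>MX'. real_law MX' \<and> cx_le MX' MY \<and> 1 \<le> cdf_of MX' \<alpha>"
proof -
  interpret Y: prob_space MY using rl by (simp add: real_law_def)
  have sY: "sets MY = sets borel" using rl by (simp add: real_law_def)
  have bm: "\<And>f::real\<Rightarrow>real. f \<in> borel_measurable borel \<Longrightarrow> f \<in> borel_measurable MY"
    using measurable_cong_sets[OF sY refl, of borel] by blast
  define e where "e = (\<integral>y. y \<partial>MY)"
  have le: "e \<le> \<alpha>"
  proof (rule ccontr)
    assume "\<not> e \<le> \<alpha>"
    have lim: "(\<lambda>n. \<integral>y. max 0 (y - real n) \<partial>MY) \<longlonglongrightarrow> (\<integral>y. 0 \<partial>MY)"
    proof (rule integral_dominated_convergence[where w="\<lambda>y. \<bar>y\<bar>"])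
      show "AE y in MY. (\<lambda>n. max 0 (y - real n)) \<longlonglongrightarrow> 0"
      proof (rule AE_I2)
        fix y :: real
        obtain N :: nat where "y < real N" using reals_Archimedean2 by blast
        then have "\<forall>n\<ge>N. max 0 (y - real n) = 0"
          by auto
        then show "(\<lambda>n. max 0 (y - real n)) \<longlonglongrightarrow> 0"
          by (intro tendsto_eventually) (auto simp: eventually_sequentially)
      qed
      show "\<And>i. AE y in MY. norm (max 0 (y - real i)) \<le> \<bar>y\<bar>"
        by (intro AE_I2) auto
    qed (auto intro!: bm iY)
    have ge: "e - \<alpha> \<le> (\<integral>y. max 0 (y - real n) \<partial>MY)" for n
    proof -
      define x where "x = real n"
      have "(\<integral>y. max 0 (x - y) \<partial>MY) = (\<integral>y. (x - y) + max 0 (y - x) \<partial>MY)"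
        by (rule Bochner_Integration.integral_cong) auto
      also have "\<dots> = (\<integral>y. x - y \<partial>MY) + (\<integral>y. max 0 (y - x) \<partial>MY)"
        by (rule Bochner_Integration.integral_add) (use iY in auto)
      also have "(\<integral>y. x - y \<partial>MY) = x - e"
        by (subst Bochner_Integration.integral_diff) (use iY in \<open>auto simp: e_def Y.prob_space\<close>)
      finally show ?thesis using S[rule_format, of x] by (simp add: x_def)
    qed
    have "e - \<alpha> \<le> (\<integral>y. 0 \<partial>MY)"
      by (rule LIMSEQ_le_const[OF lim]) (use ge in auto)
    then show False using \<open>\<not> e \<le> \<alpha>\<close> by simp
  qed
  define MX' where "MX' = return borel e"
  have rl': "real_law MX'"
    by (simp add: real_law_def MX'_def prob_space_return)
  have intR: "integrable MX' f" if "f \<in> borel_measurable borel" for f :: "real \<Rightarrow> real"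
    using that by (auto simp: integrable_iff_bounded nn_integral_return MX'_def)
  have "cx_le MX' MY"
    unfolding cx_le_def
  proof (intro conjI allI impI)
    show "integrable MX' (\<lambda>x. x)" by (rule intR) simp
    show "integrable MY (\<lambda>x. x)" by (rule iY)
    fix \<phi> :: "real \<Rightarrow> real"
    assume c: "convex_on UNIV \<phi>" and i1: "integrable MX' \<phi>" and i2: "integrable MY \<phi>"
    have "\<phi> \<in> borel_measurable borel"
      using borel_measurable_integrable[OF i1] by (simp add: MX'_def)
    then have "(\<integral>x. \<phi> x \<partial>MX') = \<phi> e"
      by (simp add: MX'_def integral_return)
    also have "\<phi> e \<le> (\<integral>x. \<phi> x \<partial>MY)"
      unfolding e_def
      by (rule Y.jensens_inequality[where I=UNIV]) (use iY i2 c in auto)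
    finally show "(\<integral>x. \<phi> x \<partial>MX') \<le> (\<integral>x. \<phi> x \<partial>MY)" .
  qed
  moreover have "cdf_of MX' \<alpha> = 1"
    using le by (simp add: cdf_of_def MX'_def measure_return)
  ultimately show ?thesis using rl' by auto
qed

lemma exist_mid:
  assumes rl: "real_law MY" and iY: "integrable MY (\<lambda>x. x)"
    and h0: "0 < h" and h1: "h < 1"
    and S: "\<forall>x. h * (x - \<alpha>) \<le> (\<integral>y. max 0 (x - y) \<partial>MY)"
  shows "\<exists>MX'. real_law MX' \<and> cx_le MX' MY \<and> h \<le> cdf_of MX' \<alpha>"
proof -
  interpret Y: real_distribution MY using rl by (simp add: real_law_def real_distribution_def real_distribution_axioms_def)
  have sY: "sets MY = sets borel" using rl by (simp add: real_law_def)
  have bm: "\<And>f::real\<Rightarrow>real. f \<in> borel_measurable borel \<Longrightarrow> f \<in> borel_measurable MY"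
    using measurable_cong_sets[OF sY refl, of borel] by blast
  define F where "F = cdf MY"
  have Fdef: "F t = measure MY {..t}" for t by (simp add: F_def cdf_def2)
  define Q where "Q = {t. h \<le> F t}"
  have "\<forall>\<^sub>F t in at_top. h < F t"
    using order_tendstoD(1)[OF Y.cdf_lim_at_top_prob h1] by (simp add: F_def)
  then obtain t0 where "h < F t0" by (auto simp: eventually_at_top_linorder)
  then have Qne: "Q \<noteq> {}" by (auto simp: Q_def intro!: exI[of _ t0])
  have "\<forall>\<^sub>F t in at_bot. F t < h"
    using order_tendstoD(2)[OF Y.cdf_lim_at_bot h0] by (simp add: F_def)
  then obtain b where b: "\<And>t. t \<le> b \<Longrightarrow> F t < h" by (auto simp: eventually_at_bot_linorder)
  have Qb: "b < t" if "t \<in> Q" for t using b[of t] that by (force simp: Q_def)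
  have bddQ: "bdd_below Q" using Qb by (auto simp: bdd_below_def intro!: exI[of _ b] less_imp_le)
  define q where "q = Inf Q"
  have Fq: "h \<le> F q"
  proof (rule tendsto_lowerbound)
    show "(F \<longlongrightarrow> F q) (at_right q)"
      using Y.cdf_is_right_cont[of q] by (simp add: F_def continuous_within)
    show "\<forall>\<^sub>F t in at_right q. h \<le> F t"
      using eventually_at_right_less[of q]
    proof (rule eventually_mono)
      fix t assume "q < t"
      then obtain s where "s \<in> Q" "s < t" using cInf_lessD[OF Qne] by (auto simp: q_def)
      then show "h \<le> F t" using Y.cdf_nondecreasing[of s t] by (auto simp: Q_def F_def)
    qed
  qed simp
  define p0 where "p0 = measure MY {..<q}"
  have qlt: "q - 1 < q" by simp
  have p0h: "p0 \<le> h"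
  proof (rule tendsto_upperbound)
    show "(F \<longlongrightarrow> p0) (at_left q)"
      using Y.cdf_at_left[of q] by (simp add: F_def p0_def)
    show "\<forall>\<^sub>F t in at_left q. F t \<le> h"
      using eventually_at_left_real[of "q - 1" q, OF qlt]
    proof (rule eventually_mono)
      fix t assume "t \<in> {q - 1<..<q}"
      then have "t \<notin> Q" using cInf_lower[OF _ bddQ, of t] by (auto simp: q_def)
      then show "F t \<le> h" by (auto simp: Q_def)
    qed
  qed simp
  define a where "a = measure MY {q}"
  have Fqa: "F q = p0 + a"
  proof -
    have "{..q} = {..<q} \<union> {q}" by auto
    then show ?thesis unfolding Fdef p0_def a_def
      using Y.finite_measure_Union[of "{..<q}" "{q}"] by (simp add: sY)
  qed
  have a0: "0 \<le> a" by (simp add: a_def)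
  define \<theta> where "\<theta> = (if a = 0 then 0 else (h - p0) / a)"
  have th0: "0 \<le> \<theta>" and th1: "\<theta> \<le> 1" and thh: "p0 + a * \<theta> = h"
    using Fq Fqa p0h a0 by (auto simp: \<theta>_def field_simps)
  define C where "C = measure_pmf (bernoulli_pmf \<theta>)"
  define P where "P = MY \<Otimes>\<^sub>M C"
  have pC: "prob_space C" by (simp add: C_def prob_space_measure_pmf)
  interpret PS: prob_space P unfolding P_def by (rule prob_space_pair[OF Y.prob_space_axioms pC])
  have sC: "sets C = UNIV" by (simp add: C_def)
  have spP: "space P = UNIV" by (simp add: P_def space_pair_measure C_def)
  have D: "distr P MY fst = MY" unfolding P_def by (rule prob_space.distr_pair_fst[OF pC])
  have fstm: "fst \<in> measurable P MY" unfolding P_def by simp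
  have fstI: "integrable P (\<lambda>z. g (fst z)) \<and> (\<integral>z. g (fst z) \<partial>P) = (\<integral>y. g y \<partial>MY)"
    if gm: "g \<in> borel_measurable borel" and gi: "integrable MY g" for g :: "real \<Rightarrow> real"
  proof
    have "integrable (distr P MY fst) g" using gi D by simp
    then show "integrable P (\<lambda>z. g (fst z))"
      by (subst (asm) integrable_distr_eq[OF fstm bm[OF gm]])
    have "(\<integral>y. g y \<partial>distr P MY fst) = (\<integral>z. g (fst z) \<partial>P)"
      by (rule integral_distr[OF fstm bm[OF gm]])
    then show "(\<integral>z. g (fst z) \<partial>P) = (\<integral>y. g y \<partial>MY)" using D by simp
  qed
  have fstm': "(\<lambda>z. g (fst z)) \<in> borel_measurable P" if "g \<in> borel_measurable borel" for g :: "real \<Rightarrow> real"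
    using measurable_comp[OF fstm bm[OF that]] by (simp add: o_def)
  define A where "A = {..<q} \<times> (UNIV::bool set) \<union> {q} \<times> {True}"
  have A1: "{..<q} \<times> (UNIV::bool set) \<in> sets P" unfolding P_def
    by (rule pair_measureI) (auto simp: sY sC)
  have A2: "{q} \<times> {True} \<in> sets P" unfolding P_def
    by (rule pair_measureI) (auto simp: sY sC)
  have AP: "A \<in> sets P" unfolding A_def using A1 A2 by (rule sets.Un)
  have sfC: "sigma_finite_measure C" using pC by (rule prob_space_imp_sigma_finite)
  have "emeasure P A = emeasure P ({..<q} \<times> (UNIV::bool set)) + emeasure P ({q} \<times> {True})"
    unfolding A_def by (rule plus_emeasure[OF A1 A2, symmetric]) auto
  also have "emeasure P ({..<q} \<times> (UNIV::bool set)) = emeasure MY {..<q} * emeasure C UNIV"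
    unfolding P_def by (rule sigma_finite_measure.emeasure_pair_measure_Times[OF sfC]) (auto simp: sY sC)
  also have "emeasure P ({q} \<times> {True}) = emeasure MY {q} * emeasure C {True}"
    unfolding P_def by (rule sigma_finite_measure.emeasure_pair_measure_Times[OF sfC]) (auto simp: sY sC)
  also have "emeasure C UNIV = 1"
    using prob_space.emeasure_space_1[OF pC] by (simp add: C_def)
  also have "emeasure C {True} = ennreal \<theta>"
    by (simp add: C_def emeasure_pmf_single th0 th1)
  finally have "emeasure P A = ennreal (p0 + a * \<theta>)"
    by (simp add: p0_def a_def Y.emeasure_eq_measure ennreal_mult' a0 th0 ennreal_plus[symmetric])
  then have mA: "measure P A = h" using thh th0 a0 h0 by (simp add: measure_def)
  define \<Psi>q where "\<Psi>q = (\<integral>y. max 0 (q - y) \<partial>MY)"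
  define \<mu> where "\<mu> = q - \<Psi>q / h"
  have "q - \<alpha> \<le> \<Psi>q / h" using S[rule_format, of q] h0 by (simp add: field_simps \<Psi>q_def)
  then have \<mu>\<alpha>: "\<mu> \<le> \<alpha>" by (simp add: \<mu>_def)
  define T where "T z = (if z \<in> A then \<mu> else fst z)" for z
  have fstb: "(\<lambda>z. fst z) \<in> borel_measurable P" using fstm'[of "\<lambda>x. x"] by simp
  have Tm: "T \<in> borel_measurable P" unfolding T_def[abs_def]
    by (rule measurable_If_set) (auto simp: spP AP fstb)
  define MX' where "MX' = distr P borel T"
  have rl': "real_law MX'"
    by (simp add: real_law_def MX'_def PS.prob_space_distr[OF Tm])
  have Tset: "T -` {..\<alpha>} \<inter> space P \<in> sets P" by (rule measurable_sets[OF Tm]) simp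
  then have Tset': "T -` {..\<alpha>} \<in> sets P" by (simp add: spP)
  have "measure P A \<le> measure P (T -` {..\<alpha>} \<inter> space P)"
    by (rule PS.finite_measure_mono) (use \<mu>\<alpha> in \<open>auto simp: T_def spP Tset'\<close>)
  then have cdfh: "h \<le> cdf_of MX' \<alpha>"
    using mA by (simp add: cdf_of_def MX'_def measure_distr[OF Tm])
  have iid: "integrable MY (\<lambda>y. y)" by (rule iY)
  have idm: "(\<lambda>y::real. y) \<in> borel_measurable borel" by simp
  have ifst: "integrable P (\<lambda>z. fst z)" using fstI[OF idm iid] by blast
  have ibound: "integrable P (\<lambda>z. \<bar>\<mu>\<bar> + \<bar>fst z\<bar>)"
    using ifst by (intro Bochner_Integration.integrable_add integrable_abs) auto
  have iT: "integrable P T"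
    by (rule Bochner_Integration.integrable_bound[OF ibound Tm]) (auto simp: T_def)
  have cx: "cx_le MX' MY"
    unfolding cx_le_def
  proof (intro conjI allI impI)
    show "integrable MX' (\<lambda>x. x)" unfolding MX'_def
      by (subst integrable_distr_eq[OF Tm]) (use iT in auto)
    show "integrable MY (\<lambda>x. x)" by (rule iY)
    fix \<phi> :: "real \<Rightarrow> real"
    assume c: "convex_on UNIV \<phi>" and i1: "integrable MX' \<phi>" and i2: "integrable MY \<phi>"
    have \<phi>m: "\<phi> \<in> borel_measurable borel"
      using borel_measurable_integrable[OF i2] measurable_cong_sets[OF sY refl, of borel] by blast
    have i1': "integrable P (\<lambda>z. \<phi> (T z))"
      using i1 unfolding MX'_def by (subst (asm) integrable_distr_eq[OF Tm \<phi>m])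
    have int1: "(\<integral>x. \<phi> x \<partial>MX') = (\<integral>z. \<phi> (T z) \<partial>P)"
      unfolding MX'_def by (rule integral_distr[OF Tm \<phi>m])
    have f2: "integrable P (\<lambda>z. \<phi> (fst z))" "(\<integral>z. \<phi> (fst z) \<partial>P) = (\<integral>y. \<phi> y \<partial>MY)"
      using fstI[OF \<phi>m i2] by auto
    define sl where "sl = Inf ((\<lambda>t. (\<phi> \<mu> - \<phi> t) / (\<mu> - t)) ` ({\<mu><..} \<inter> UNIV))"
    have sup: "\<phi> \<mu> + sl * (y - \<mu>) \<le> \<phi> y" for y
      using convex_le_Inf_differential[OF c, of \<mu> y] by (simp add: sl_def)
    have mI: "(indicator A :: _ \<Rightarrow> real) \<in> borel_measurable P"
      by (rule borel_measurable_indicator[OF AP])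
    have mD: "(\<lambda>z. fst z - \<mu>) \<in> borel_measurable P"
      using fstb by simp
    have mA': "(\<lambda>z. indicator A z * (fst z - \<mu>)) \<in> borel_measurable P"
      using mI mD by (rule borel_measurable_times)
    have iA: "integrable P (\<lambda>z. indicator A z * (fst z - \<mu>))"
      by (rule Bochner_Integration.integrable_bound[OF ibound mA'])
         (auto simp: indicator_def)
    have imax: "integrable MY (\<lambda>y. max 0 (q - y))" using iY by (intro integrable_max) auto
    have f3: "integrable P (\<lambda>z. max 0 (q - fst z))" "(\<integral>z. max 0 (q - fst z) \<partial>P) = \<Psi>q"
      using fstI[of "\<lambda>y. max 0 (q - y)"] imax by (auto simp: \<Psi>q_def)
    have iI: "integrable P (indicator A :: _ \<Rightarrow> real)"
      by (rule integrable_real_indicator) (auto simp: AP PS.emeasure_eq_measure)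
    have pw: "indicator A z * (fst z - \<mu>) = (\<Psi>q / h) * indicator A z - max 0 (q - fst z)" for z
    proof (cases z)
      case (Pair y bb)
      show ?thesis
      proof (cases "z \<in> A")
        case True
        then have "y \<le> q" by (auto simp: A_def Pair)
        then show ?thesis using True by (simp add: Pair \<mu>_def algebra_simps)
      next
        case False
        then have "q \<le> y" by (auto simp: A_def Pair)
        then show ?thesis using False by (simp add: Pair)
      qed
    qed
    have eqA: "(\<integral>z. indicator A z * (fst z - \<mu>) \<partial>P) = 0"
    proof -
      have "(\<integral>z. indicator A z * (fst z - \<mu>) \<partial>P) = (\<integral>z. (\<Psi>q / h) * indicator A z - max 0 (q - fst z) \<partial>P)"
        by (simp only: pw)
      also have "\<dots> = (\<Psi>q / h) * (\<integral>z. indicator A z \<partial>P) - (\<integral>z. max 0 (q - fst z) \<partial>P)"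
        using iI f3(1) by simp
      also have "\<dots> = 0" using mA f3(2) h0 by (simp add: spP)
      finally show ?thesis .
    qed
    have "0 \<le> (\<integral>z. \<phi> (fst z) - \<phi> (T z) - sl * (indicator A z * (fst z - \<mu>)) \<partial>P)"
    proof (rule integral_nonneg_AE, rule AE_I2)
      fix z
      show "0 \<le> \<phi> (fst z) - \<phi> (T z) - sl * (indicator A z * (fst z - \<mu>))"
        using sup[of "fst z"] by (cases "z \<in> A") (auto simp: T_def)
    qed
    also have "\<dots> = (\<integral>z. \<phi> (fst z) \<partial>P) - (\<integral>z. \<phi> (T z) \<partial>P) - sl * (\<integral>z. indicator A z * (fst z - \<mu>) \<partial>P)"
      using f2(1) i1' iA by simp
    finally show "(\<integral>x. \<phi> x \<partial>MX') \<le> (\<integral>x. \<phi> x \<partial>MY)"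
      using int1 f2(2) eqA by simp
  qed
  show ?thesis using rl' cx cdfh by blast
qed


theorem lemma2:
  fixes MX MY :: "real measure" and \<alpha> :: real
  assumes "real_law MX" and "real_law MY" and "cx_le MX MY"
  defines "h \<equiv> min 1 (GREATEST w::real. \<forall>x::real.
              w * (x - \<alpha>) \<le> (LINT t:{..x}|lborel. cdf_of MY t))"
  shows "cdf_of MX \<alpha> \<le> h \<and>
         (\<exists>MX'::real measure. real_law MX' \<and> cx_le MX' MY \<and> cdf_of MX' \<alpha> = h)"
proof -
  have iY: "integrable MY (\<lambda>x. x)" using assms(3) by (simp add: cx_le_def)
  define m where "m = (GREATEST w::real. \<forall>x::real.
              w * (x - \<alpha>) \<le> (LINT t:{..x}|lborel. cdf_of MY t))"
  have Peq: "(LINT t:{..x}|lborel. cdf_of MY t) = (\<integral>y. max 0 (x - y) \<partial>MY)" for x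
    by (rule psi_eq[OF assms(2)])
  interpret Y: prob_space MY using assms(2) by (simp add: real_law_def)
  have nn: "0 \<le> (LINT t:{..x}|lborel. cdf_of MY t)" for x
    unfolding Peq by (intro integral_nonneg_AE) auto
  note G0 = greatest_S[of "\<lambda>x. LINT t:{..x}|lborel. cdf_of MY t" \<alpha>, OF nn]
  have G1: "\<forall>x. m * (x - \<alpha>) \<le> (LINT t:{..x}|lborel. cdf_of MY t)"
    unfolding m_def by (rule G0(1))
  have G2: "w \<le> m" if "\<forall>x. w * (x - \<alpha>) \<le> (LINT t:{..x}|lborel. cdf_of MY t)" for w
    unfolding m_def by (rule greatest_S(2)[where \<Psi>="\<lambda>x. LINT t:{..x}|lborel. cdf_of MY t" and \<alpha>=\<alpha>, OF nn that])
  have G3: "0 \<le> m" unfolding m_def by (rule G0(3))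
  have hm: "h = min 1 m" by (simp add: h_def m_def)
  have up: "cdf_of M \<alpha> \<le> h" if rM: "real_law M" and cM: "cx_le M MY" for M
  proof -
    have "\<forall>x. cdf_of M \<alpha> * (x - \<alpha>) \<le> (LINT t:{..x}|lborel. cdf_of MY t)"
      using part1[OF rM assms(2) cM] by (simp add: Peq)
    then have "cdf_of M \<alpha> \<le> m" by (rule G2)
    moreover have "cdf_of M \<alpha> \<le> 1"
      using rM by (simp add: real_law_def cdf_of_def prob_space.prob_le_1)
    ultimately show ?thesis by (simp add: hm)
  qed
  have h0: "0 \<le> h" using G3 by (simp add: hm)
  have hS: "\<forall>x. h * (x - \<alpha>) \<le> (\<integral>y. max 0 (x - y) \<partial>MY)"
  proof
    fix x
    show "h * (x - \<alpha>) \<le> (\<integral>y. max 0 (x - y) \<partial>MY)"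
    proof (cases "x \<le> \<alpha>")
      case True
      then have "h * (x - \<alpha>) \<le> 0" using h0 by (intro mult_nonneg_nonpos) auto
      moreover have "0 \<le> (\<integral>y. max 0 (x - y) \<partial>MY)" by (intro integral_nonneg_AE) auto
      ultimately show ?thesis by linarith
    next
      case False
      then have "h * (x - \<alpha>) \<le> m * (x - \<alpha>)" by (intro mult_right_mono) (auto simp: hm)
      then show ?thesis using G1 by (simp add: Peq) (meson order_trans)
    qed
  qed
  have "\<exists>MX'. real_law MX' \<and> cx_le MX' MY \<and> h \<le> cdf_of MX' \<alpha>"
  proof (cases "h \<le> cdf_of MY \<alpha>")
    case True
    have "cx_le MY MY" using iY by (simp add: cx_le_def)
    then show ?thesis using True assms(2) by blast
  next
    case False
    then have hpos: "0 < h" proof -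
      have "0 \<le> cdf_of MY \<alpha>" by (simp add: cdf_of_def)
      then show ?thesis using False by linarith
    qed
    show ?thesis
    proof (cases "h = 1")
      case True
      then show ?thesis using exist_one[OF assms(2) iY, of \<alpha>] hS by simp
    next
      case False
      then have "h < 1" by (simp add: hm)
      then show ?thesis using exist_mid[OF assms(2) iY hpos _ hS] by blast
    qed
  qed
  then obtain MX' where "real_law MX'" "cx_le MX' MY" "h \<le> cdf_of MX' \<alpha>" by blast
  moreover have "cdf_of MX' \<alpha> \<le> h" using up calculation by blast
  ultimately show ?thesis using up[OF assms(1) assms(3)] by force
qed

end
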